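(* Let $\tilde X(t)=V(t-t_0)$ for $t\ge t_0$, where $V\sim\mathcal{N}(0,I_d)$, and let $D_c$ be the closed unit ball of $\mathbb{R}^d$ centred at $0$. Then for $\alpha>0$ the unique continuous solution of $$f(t)=\alpha\mu_{\tilde X(t)}(D_c)-\alpha\int_{t_0}^t\mu_{\tilde X(t)\mid\tilde X(u)\in D_c}(D_c)f(u)\,du,\quad t>t_0,$$ is $f(t)=\alpha e^{-\alpha(t-t_0)}F_{\chi^2_d}\{(t-t_0)^{-2}\}$, and $\int_{t_0}^\infty f(t)\,dt<1$, i.e. the corresponding capture time satisfies $\mathbb{P}(T_c=\infty)>0$.
   Context: $F_{\chi^2_d}$ is the cumulative distribution function of the chi-squared distribution with $d$ degrees of freedom. $\mu_{\tilde X(t)\mid\tilde X(u)\in D_c}(D_c)=\mu_{\tilde X(t),\tilde X(u)}(D_c\times D_c)/\mu_{\tilde X(u)}(D_c)$. The capture time $T_c$ has density $f$ on $(t_0,\infty)$ and $\mathbb{P}(T_c=\infty)=1-\int_{t_0}^\infty f$. *)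

theory Defs
  imports "HOL-Probability.Probability"
begin

definition std_gauss :: "('a::euclidean_space) measure" where
  "std_gauss = density lborel
     (\<lambda>x. ennreal ((2 * pi) powr (- real DIM('a) / 2) * exp (- (norm x)\<^sup>2 / 2)))"

text \<open>Law of Xtilde(t) = V (t - t0), V ~ N(0,I_d): mu_{X(t)}(D) = P(V (t - t0) in D).\<close>
definition lawX :: "real \<Rightarrow> real \<Rightarrow> 'a::euclidean_space set \<Rightarrow> real" where
  "lawX t0 t D = measure (std_gauss :: 'a measure) {v \<in> space std_gauss. (t - t0) *\<^sub>R v \<in> D}"

definition lawXX :: "real \<Rightarrow> real \<Rightarrow> real \<Rightarrow> 'a::euclidean_space set \<Rightarrow> real" where
  "lawXX t0 t u D = measure (std_gauss :: 'a measure)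
     {v \<in> space std_gauss. (t - t0) *\<^sub>R v \<in> D \<and> (u - t0) *\<^sub>R v \<in> D}"

definition condlaw :: "real \<Rightarrow> real \<Rightarrow> real \<Rightarrow> 'a::euclidean_space set \<Rightarrow> real" where
  "condlaw t0 t u D = lawXX t0 t u D / (lawX t0 u D :: real)"

definition chi2_density :: "nat \<Rightarrow> real \<Rightarrow> real" where
  "chi2_density d x = (if x > 0 then x powr (real d / 2 - 1) * exp (- x / 2)
       / (2 powr (real d / 2) * Gamma (real d / 2)) else 0)"

definition chi2_cdf :: "nat \<Rightarrow> real \<Rightarrow> real" where
  "chi2_cdf d x = (LBINT y=0..x. chi2_density d y)"

end

theory Submission
  imports Defs
begin

lemma std_gauss_sets[simp, measurable_cong]: "sets std_gauss = sets borel"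
  by (simp add: std_gauss_def)
lemma std_gauss_space[simp]: "space std_gauss = UNIV"
  by (simp add: std_gauss_def)

lemma std_gauss_prob: "prob_space (std_gauss :: 'a::euclidean_space measure)"
proof (rule prob_spaceI)
  let ?k = "(2 * pi) powr (- real DIM('a) / 2)"
  have "emeasure (std_gauss::'a measure) (space std_gauss)
     = (\<integral>\<^sup>+ x. ennreal (?k * exp (- (norm (x::'a))\<^sup>2 / 2)) \<partial>lborel)"
    by (simp add: std_gauss_def emeasure_density)
  also have "\<dots> = (\<integral>\<^sup>+ f. ennreal (?k * exp (- (norm (\<Sum>b\<in>Basis. f b *\<^sub>R b :: 'a))\<^sup>2 / 2))
      \<partial>(\<Pi>\<^sub>M b\<in>Basis. lborel))"
    by (subst lborel_eq) (simp add: nn_integral_distr)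
  also have "\<dots> = (\<integral>\<^sup>+ f. (\<Prod>b\<in>(Basis::'a set). ennreal (std_normal_density (f b)))
      \<partial>(\<Pi>\<^sub>M b\<in>Basis. lborel))"
  proof (intro nn_integral_cong)
    fix f :: "'a \<Rightarrow> real"
    have n: "(norm (\<Sum>b\<in>Basis. f b *\<^sub>R b :: 'a))\<^sup>2 = (\<Sum>b\<in>(Basis::'a set). (f b)\<^sup>2)"
      unfolding power2_norm_eq_inner by (subst euclidean_inner) (simp add: power2_eq_square)
    have k: "?k = (\<Prod>b\<in>(Basis::'a set). 1 / sqrt (2 * pi))"
    proof -
      have "?k = ((2*pi) powr (1/2)) powr (- real DIM('a))"
        by (simp add: powr_powr)
      also have "\<dots> = inverse (sqrt (2*pi) ^ DIM('a))"
        by (simp add: powr_half_sqrt powr_minus powr_realpow)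
      also have "\<dots> = (\<Prod>b\<in>(Basis::'a set). 1 / sqrt (2 * pi))"
        by (simp add: power_one_over inverse_eq_divide)
      finally show ?thesis .
    qed
    have e: "exp (- (\<Sum>b\<in>(Basis::'a set). (f b)\<^sup>2) / 2) = (\<Prod>b\<in>(Basis::'a set). exp (- (f b)\<^sup>2 / 2))"
      by (simp add: exp_sum[symmetric] sum_negf sum_divide_distrib)
    show "ennreal (?k * exp (- (norm (\<Sum>b\<in>Basis. f b *\<^sub>R b :: 'a))\<^sup>2 / 2))
       = (\<Prod>b\<in>(Basis::'a set). ennreal (std_normal_density (f b)))"
    proof -
      have "?k * exp (- (norm (\<Sum>b\<in>Basis. f b *\<^sub>R b :: 'a))\<^sup>2 / 2) = (\<Prod>b\<in>(Basis::'a set). std_normal_density (f b))"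
        unfolding n e k std_normal_density_def prod.distrib by simp
      then show ?thesis by (simp add: prod_ennreal)
    qed
  qed
  also have "\<dots> = (\<Prod>b\<in>(Basis::'a set). \<integral>\<^sup>+ x. ennreal (std_normal_density x) \<partial>lborel)"
    by (rule product_sigma_finite.product_nn_integral_prod) (auto simp: product_sigma_finite_def sigma_finite_lborel)
  also have "\<dots> = 1"
    using prob_space_normal_density[of 1 0]
    by (simp add: prob_space_def prob_space_axioms_def emeasure_density)
  finally show "emeasure (std_gauss::'a measure) (space std_gauss) = 1" .
qed

definition gk :: "nat \<Rightarrow> real" where "gk d = (2 * pi) powr (- real d / 2)"
definition Ek :: "nat \<Rightarrow> real \<Rightarrow> real" where "Ek d r = gk d * exp (- r\<^sup>2 / 2)"
definition Wv :: "nat \<Rightarrow> real \<Rightarrow> real" where "Wv d r = unit_ball_vol (real d) * r ^ d"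
definition GB :: "'a::euclidean_space itself \<Rightarrow> real \<Rightarrow> real" where
  "GB t r = measure (std_gauss::'a measure) (cball 0 r)"

lemma gk_pos: "gk d > 0" by (simp add: gk_def)
lemma Ek_pos: "Ek d r > 0" by (simp add: Ek_def gk_pos)

lemma Wv_mono: "0 \<le> r \<Longrightarrow> r \<le> r' \<Longrightarrow> Wv d r \<le> Wv d r'"
  unfolding Wv_def by (intro mult_left_mono power_mono) auto

lemma shell_emeasure:
  fixes r r' :: real
  assumes "0 \<le> r" "r \<le> r'"
  shows "ennreal (Ek DIM('a) r' * (Wv DIM('a) r' - Wv DIM('a) r))
           \<le> emeasure (std_gauss::'a::euclidean_space measure) (cball 0 r' - cball 0 r)"
    and "emeasure (std_gauss::'a::euclidean_space measure) (cball 0 r' - cball 0 r)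
           \<le> ennreal (Ek DIM('a) r * (Wv DIM('a) r' - Wv DIM('a) r))"
proof -
  let ?S = "cball (0::'a) r' - cball 0 r"
  let ?g = "\<lambda>x::'a. ennreal ((2 * pi) powr (- real DIM('a) / 2) * exp (- (norm x)\<^sup>2 / 2))"
  have S: "?S \<in> sets borel" by auto
  have W0: "0 \<le> Wv DIM('a) r' - Wv DIM('a) r" using Wv_mono[OF assms, of "DIM('a)"] by simp
  have lS: "emeasure lborel ?S = ennreal (Wv DIM('a) r' - Wv DIM('a) r)"
  proof -
    have "emeasure lborel ?S = emeasure lborel (cball (0::'a) r') - emeasure lborel (cball (0::'a) r)"
      using assms by (intro emeasure_Diff) (auto simp: emeasure_cball)
    also have "\<dots> = ennreal (Wv DIM('a) r' - Wv DIM('a) r)"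
      using assms by (simp add: emeasure_cball Wv_def ennreal_minus)
    finally show ?thesis .
  qed
  have eq: "emeasure (std_gauss::'a measure) ?S = (\<integral>\<^sup>+ x. ?g x * indicator ?S x \<partial>lborel)"
    unfolding std_gauss_def by (rule emeasure_density) (auto)
  have "(\<integral>\<^sup>+ x. ennreal (Ek DIM('a) r') * indicator ?S x \<partial>lborel) \<le> (\<integral>\<^sup>+ x. ?g x * indicator ?S x \<partial>lborel)"
  proof (intro nn_integral_mono)
    fix x :: 'a
    show "ennreal (Ek DIM('a) r') * indicator ?S x \<le> ?g x * indicator ?S x"
    proof (cases "x \<in> ?S")
      case True
      then have "norm x \<le> r'" by auto
      then have "(norm x)\<^sup>2 \<le> r'\<^sup>2" by (intro power_mono) auto
      then show ?thesis using True
        by (auto simp: Ek_def gk_def intro!: ennreal_leI mult_left_mono)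
    qed simp
  qed
  then show "ennreal (Ek DIM('a) r' * (Wv DIM('a) r' - Wv DIM('a) r)) \<le> emeasure (std_gauss::'a measure) ?S"
    using S lS Ek_pos[of "DIM('a)" r'] W0 by (simp add: eq nn_integral_cmult_indicator ennreal_mult)
  have "(\<integral>\<^sup>+ x. ?g x * indicator ?S x \<partial>lborel) \<le> (\<integral>\<^sup>+ x. ennreal (Ek DIM('a) r) * indicator ?S x \<partial>lborel)"
  proof (intro nn_integral_mono)
    fix x :: 'a
    show "?g x * indicator ?S x \<le> ennreal (Ek DIM('a) r) * indicator ?S x"
    proof (cases "x \<in> ?S")
      case True
      then have "r \<le> norm x" by auto
      then have "r\<^sup>2 \<le> (norm x)\<^sup>2" using assms by (intro power_mono) auto
      then show ?thesis using True
        by (auto simp: Ek_def gk_def intro!: ennreal_leI mult_left_mono)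
    qed simp
  qed
  then show "emeasure (std_gauss::'a measure) ?S \<le> ennreal (Ek DIM('a) r * (Wv DIM('a) r' - Wv DIM('a) r))"
    using S lS Ek_pos[of "DIM('a)" r] W0 by (simp add: eq nn_integral_cmult_indicator ennreal_mult)
qed


interpretation SG: prob_space "std_gauss :: 'a::euclidean_space measure"
  by (rule std_gauss_prob)

lemma GB_nonneg: "GB t r \<ge> 0" by (simp add: GB_def)
lemma GB_le1: "GB (t::'a::euclidean_space itself) r \<le> 1" unfolding GB_def by (rule SG.prob_le_1)

lemma GB_shell:
  fixes r r' :: real and t :: "'a::euclidean_space itself"
  assumes "0 \<le> r" "r \<le> r'"
  shows "Ek DIM('a) r' * (Wv DIM('a) r' - Wv DIM('a) r) \<le> GB t r' - GB t r"
    and "GB t r' - GB t r \<le> Ek DIM('a) r * (Wv DIM('a) r' - Wv DIM('a) r)"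
proof -
  have W0: "0 \<le> Wv DIM('a) r' - Wv DIM('a) r" using Wv_mono[OF assms, of "DIM('a)"] by simp
  have eq: "GB t r' - GB t r = measure (std_gauss::'a measure) (cball 0 r' - cball 0 r)"
    unfolding GB_def using assms by (subst SG.finite_measure_Diff) auto
  have em: "emeasure (std_gauss::'a measure) (cball 0 r' - cball 0 r) = ennreal (GB t r' - GB t r)"
    unfolding eq by (rule SG.emeasure_eq_measure)
  have m0: "0 \<le> GB t r' - GB t r" unfolding eq by simp
  have "ennreal (Ek DIM('a) r' * (Wv DIM('a) r' - Wv DIM('a) r)) \<le> ennreal (GB t r' - GB t r)"
    using shell_emeasure(1)[OF assms, where 'a='a] em by simp
  then show "Ek DIM('a) r' * (Wv DIM('a) r' - Wv DIM('a) r) \<le> GB t r' - GB t r"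
    using m0 by (simp add: ennreal_le_iff)
  have "ennreal (GB t r' - GB t r) \<le> ennreal (Ek DIM('a) r * (Wv DIM('a) r' - Wv DIM('a) r))"
    using shell_emeasure(2)[OF assms, where 'a='a] em by simp
  then show "GB t r' - GB t r \<le> Ek DIM('a) r * (Wv DIM('a) r' - Wv DIM('a) r)"
    using W0 Ek_pos[of "DIM('a)" r] by (simp add: ennreal_le_iff)
qed

lemma GB_mono: "0 \<le> r \<Longrightarrow> r \<le> r' \<Longrightarrow> GB (t::'a::euclidean_space itself) r \<le> GB t r'"
  using GB_shell(1)[of r r' t] Ek_pos[of "DIM('a)" r'] Wv_mono[of r r' "DIM('a)"]
  by (smt (verit) mult_nonneg_nonneg)

lemma ball_emeasure:
  fixes r :: real
  shows "emeasure (std_gauss::'a::euclidean_space measure) (cball 0 r) \<le> ennreal (gk DIM('a) * Wv DIM('a) r)"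
proof (cases "r \<ge> 0")
  case True
  let ?S = "cball (0::'a) r"
  let ?g = "\<lambda>x::'a. ennreal ((2 * pi) powr (- real DIM('a) / 2) * exp (- (norm x)\<^sup>2 / 2))"
  have eq: "emeasure (std_gauss::'a measure) ?S = (\<integral>\<^sup>+ x. ?g x * indicator ?S x \<partial>lborel)"
    unfolding std_gauss_def by (rule emeasure_density) (auto)
  have "(\<integral>\<^sup>+ x. ?g x * indicator ?S x \<partial>lborel) \<le> (\<integral>\<^sup>+ x. ennreal (gk DIM('a)) * indicator ?S x \<partial>lborel)"
    by (intro nn_integral_mono) (auto simp: gk_def intro!: ennreal_leI split: split_indicator)
  then show ?thesis
    using True gk_pos[of "DIM('a)"] by (simp add: eq nn_integral_cmult_indicator emeasure_cball Wv_def ennreal_mult)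
next
  case False
  then show ?thesis by simp
qed

lemma GB_le_ball: "0 \<le> r \<Longrightarrow> GB (t::'a::euclidean_space itself) r \<le> gk DIM('a) * Wv DIM('a) r"
proof -
  assume True: "0 \<le> r"
  have "0 \<le> gk DIM('a) * Wv DIM('a) r" using True gk_pos[of "DIM('a)"] by (simp add: Wv_def)
  then show ?thesis
    using ball_emeasure[of r, where 'a='a] unfolding GB_def SG.emeasure_eq_measure
    by (simp add: ennreal_le_iff)
qed

lemma Wv_pos: "0 < r \<Longrightarrow> Wv DIM('a::euclidean_space) r > 0"
  by (simp add: Wv_def)


lemma quot_bounds:
  fixes t :: "'a::euclidean_space itself"
  assumes "0 < r" "0 < y" "y \<noteq> r"
  defines "q \<equiv> (Wv DIM('a) y - Wv DIM('a) r) / (y - r)"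
  shows "min (Ek DIM('a) y) (Ek DIM('a) r) * q \<le> (GB t y - GB t r) / (y - r)"
    and "(GB t y - GB t r) / (y - r) \<le> max (Ek DIM('a) y) (Ek DIM('a) r) * q"
proof -
  let ?W = "Wv DIM('a)" and ?E = "Ek DIM('a)" and ?G = "GB t"
  have "min (?E y) (?E r) * q \<le> (?G y - ?G r) / (y - r) \<and> (?G y - ?G r) / (y - r) \<le> max (?E y) (?E r) * q"
  proof (cases "r < y")
    case True
    have q0: "0 \<le> q" unfolding q_def using Wv_mono[of r y "DIM('a)"] assms True by simp
    have 1: "?E y * (?W y - ?W r) \<le> ?G y - ?G r" "?G y - ?G r \<le> ?E r * (?W y - ?W r)"
      using GB_shell[of r y t] assms True by auto
    have "?E y * q \<le> (?G y - ?G r) / (y - r)" unfolding q_def using 1(1) True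
      using divide_right_mono[OF 1(1), of "y - r"] divide_right_mono[OF 1(2), of "y - r"] by simp
    moreover have "(?G y - ?G r) / (y - r) \<le> ?E r * q" unfolding q_def using 1(2) True
      using divide_right_mono[OF 1(1), of "y - r"] divide_right_mono[OF 1(2), of "y - r"] by simp
    moreover have "min (?E y) (?E r) * q \<le> ?E y * q" "?E r * q \<le> max (?E y) (?E r) * q"
      using q0 by (auto intro!: mult_right_mono)
    ultimately show ?thesis by linarith
  next
    case False
    then have yr: "y < r" using assms by simp
    have qq: "q = (?W r - ?W y) / (r - y)" unfolding q_def by (metis minus_diff_eq minus_divide_divide)
    have gg: "(?G y - ?G r) / (y - r) = (?G r - ?G y) / (r - y)" by (metis minus_diff_eq minus_divide_divide)
    have q0: "0 \<le> q" unfolding qq using Wv_mono[of y r "DIM('a)"] assms yr by simp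
    have 1: "?E r * (?W r - ?W y) \<le> ?G r - ?G y" "?G r - ?G y \<le> ?E y * (?W r - ?W y)"
      using GB_shell[of y r t] assms yr by auto
    have "?E r * q \<le> (?G y - ?G r) / (y - r)" unfolding qq gg using 1(1) yr
      using divide_right_mono[OF 1(1), of "r - y"] divide_right_mono[OF 1(2), of "r - y"] by simp
    moreover have "(?G y - ?G r) / (y - r) \<le> ?E y * q" unfolding qq gg using 1(2) yr
      using divide_right_mono[OF 1(1), of "r - y"] divide_right_mono[OF 1(2), of "r - y"] by simp
    moreover have "min (?E y) (?E r) * q \<le> ?E r * q" "?E y * q \<le> max (?E y) (?E r) * q"
      using q0 by (auto intro!: mult_right_mono)
    ultimately show ?thesis by linarith
  qed
  then show "min (?E y) (?E r) * q \<le> (?G y - ?G r) / (y - r)"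
    and "(?G y - ?G r) / (y - r) \<le> max (?E y) (?E r) * q" by auto
qed

definition Wd :: "nat \<Rightarrow> real \<Rightarrow> real" where
  "Wd d r = unit_ball_vol (real d) * (real d * r ^ (d - 1))"

lemma Wv_deriv: "(Wv d has_real_derivative Wd d r) (at r)"
  unfolding Wv_def Wd_def by (auto intro!: derivative_eq_intros)

lemma GB_deriv:
  fixes t :: "'a::euclidean_space itself"
  assumes "0 < r"
  shows "(GB t has_real_derivative (Ek DIM('a) r * Wd DIM('a) r)) (at r)"
proof -
  let ?W = "Wv DIM('a)" and ?E = "Ek DIM('a)" and ?G = "GB t" and ?D = "Wd DIM('a) r"
  let ?q = "\<lambda>y. (?W y - ?W r) / (y - r)"
  have q: "(?q \<longlongrightarrow> ?D) (at r)" using Wv_deriv[of "DIM('a)" r] by (simp add: has_field_derivative_iff)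
  have Ec: "(?E \<longlongrightarrow> ?E r) (at r)" unfolding Ek_def
    by (intro tendsto_intros) auto
  have lo: "((\<lambda>y. min (?E y) (?E r) * ?q y) \<longlongrightarrow> min (?E r) (?E r) * ?D) (at r)"
    by (intro tendsto_mult tendsto_min Ec tendsto_const q)
  have hi: "((\<lambda>y. max (?E y) (?E r) * ?q y) \<longlongrightarrow> max (?E r) (?E r) * ?D) (at r)"
    by (intro tendsto_mult tendsto_max Ec tendsto_const q)
  have ev: "eventually (\<lambda>y. 0 < y \<and> y \<noteq> r) (at r)"
    using order_tendstoD(1)[OF tendsto_ident_at[of r UNIV] assms] eventually_neq_at_within[of r r UNIV]
    by (rule eventually_conj)
  have e1: "\<forall>\<^sub>F y in at r. min (?E y) (?E r) * ?q y \<le> (?G y - ?G r) / (y - r)"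
    using ev by eventually_elim (use quot_bounds(1)[OF assms] in auto)
  have e2: "\<forall>\<^sub>F y in at r. (?G y - ?G r) / (y - r) \<le> max (?E y) (?E r) * ?q y"
    using ev by eventually_elim (use quot_bounds(2)[OF assms] in auto)
  have lo': "((\<lambda>y. min (?E y) (?E r) * ?q y) \<longlongrightarrow> ?E r * ?D) (at r)" using lo by simp
  have hi': "((\<lambda>y. max (?E y) (?E r) * ?q y) \<longlongrightarrow> ?E r * ?D) (at r)" using hi by simp
  have "((\<lambda>y. (?G y - ?G r) / (y - r)) \<longlongrightarrow> ?E r * ?D) (at r)"
    by (rule tendsto_sandwich[OF e1 e2 lo' hi'])
  then show ?thesis by (simp add: has_field_derivative_iff)
qed


lemma chi2_density_alg:
  fixes y :: real and d :: nat
  assumes y: "0 < y" and d: "1 \<le> d"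
  shows "Ek d (sqrt y) * Wd d (sqrt y) * (inverse (sqrt y) / 2) = chi2_density d y"
proof -
  define h where "h = real d / 2"
  have h0: "0 < h" using d by (simp add: h_def)
  have s0: "0 < sqrt y" using y by simp
  have sq: "sqrt y ^ (d - 1) * (inverse (sqrt y) / 2) = y powr (h - 1) / 2"
  proof -
    have "sqrt y ^ d = y powr h"
      using y by (simp add: h_def powr_half_sqrt[symmetric] powr_power)
    moreover have "sqrt y ^ d = sqrt y ^ (d - 1) * sqrt y"
      using d by (metis One_nat_def Suc_pred' less_eq_Suc_le power_Suc2)
    ultimately have "sqrt y ^ (d - 1) = y powr h / sqrt y" using s0 by (simp add: field_simps)
    then have "sqrt y ^ (d - 1) * (inverse (sqrt y) / 2) = y powr h / (sqrt y * sqrt y) / 2"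
      by (simp add: field_simps)
    also have "\<dots> = y powr h / y / 2" using y by simp
    also have "\<dots> = y powr (h - 1) / 2" using y by (simp add: powr_diff)
    finally show ?thesis .
  qed
  have pw: "(2 * pi) powr (- h) * pi powr h = 2 powr (- h)"
    by (simp add: powr_mult powr_minus field_simps)
  have G: "Gamma (h + 1) = h * Gamma h" by (rule Gamma_plus1) (use h0 nonpos_Ints_nonpos in force)
  have Gp: "Gamma h > 0" using h0 by (simp add: Gamma_real_pos)
  have "Ek d (sqrt y) * Wd d (sqrt y) * (inverse (sqrt y) / 2)
      = (2 * pi) powr (- h) * exp (- y / 2) * (pi powr h / Gamma (h + 1)) * real d * (sqrt y ^ (d - 1) * (inverse (sqrt y) / 2))"
    using y by (simp add: Ek_def gk_def Wd_def unit_ball_vol_def h_def)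
  also have "\<dots> = ((2 * pi) powr (- h) * pi powr h) * exp (- y / 2) * (real d / (2 * h)) * y powr (h - 1) / Gamma h"
    unfolding sq G using h0 Gp by (simp add: field_simps)
  also have "\<dots> = 2 powr (- h) * exp (- y / 2) * y powr (h - 1) / Gamma h"
    unfolding pw using h0 by (simp add: h_def)
  also have "\<dots> = chi2_density d y"
    using y by (simp add: chi2_density_def h_def powr_minus field_simps)
  finally show ?thesis .
qed


lemma DIM_ge1: "1 \<le> DIM('a::euclidean_space)"
  using DIM_positive[where 'a='a] by linarith

lemma chi2_density_nonneg: "0 \<le> chi2_density d y"
  by (cases "d = 0") (auto simp: chi2_density_def intro!: divide_nonneg_pos Gamma_real_pos)

lemma chi2_density_isCont:
  assumes "0 < y" "1 \<le> d"
  shows "isCont (chi2_density d) y"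
proof -
  have ev: "eventually (\<lambda>z. z \<in> {0<..}) (nhds y)"
    using assms by (intro eventually_nhds_in_open) auto
  have Gam: "Gamma (real d / 2) > 0" using assms by (intro Gamma_real_pos) auto
  have "isCont (chi2_density d) y \<longleftrightarrow> isCont (\<lambda>x. x powr (real d / 2 - 1) * exp (- x / 2)
       / (2 powr (real d / 2) * Gamma (real d / 2))) y"
    by (rule isCont_cong) (use ev in \<open>eventually_elim, simp add: chi2_density_def\<close>)
  also have "\<dots>" by (intro continuous_intros) (use assms in \<open>auto simp: less_imp_neq[OF Gam, symmetric]\<close>)
  finally show ?thesis .
qed

lemma GB_right0: "((\<lambda>y. GB (t::'a::euclidean_space itself) (sqrt y)) \<longlongrightarrow> 0) (at_right 0)"
proof (rule tendsto_sandwich[where f="\<lambda>_. 0" and h="\<lambda>y. gk DIM('a) * Wv DIM('a) (sqrt y)"])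
  show "\<forall>\<^sub>F y in at_right 0. 0 \<le> GB t (sqrt y)" by (simp add: GB_nonneg)
  show "\<forall>\<^sub>F y in at_right 0. GB t (sqrt y) \<le> gk DIM('a) * Wv DIM('a) (sqrt y)"
    using eventually_at_right_less[of "0::real"] by eventually_elim (simp add: GB_le_ball)
  have "((\<lambda>y. gk DIM('a) * Wv DIM('a) (sqrt y)) \<longlongrightarrow> gk DIM('a) * Wv DIM('a) (sqrt 0)) (at_right 0)"
    unfolding Wv_def by (intro tendsto_intros)
  then show "((\<lambda>y. gk DIM('a) * Wv DIM('a) (sqrt y)) \<longlongrightarrow> 0) (at_right 0)"
    using DIM_positive[where 'a='a] by (simp add: Wv_def zero_power)
qed simp

lemma chi2_GB:
  fixes t :: "'a::euclidean_space itself"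
  assumes x: "0 < x"
  shows "chi2_cdf DIM('a) x = GB t (sqrt x)"
proof -
  let ?F = "\<lambda>y. GB t (sqrt y)"
  have d: "1 \<le> DIM('a)" by (rule DIM_ge1)
  have der: "DERIV ?F y :> chi2_density DIM('a) y" if "0 < y" for y
  proof -
    have "DERIV ?F y :> Ek DIM('a) (sqrt y) * Wd DIM('a) (sqrt y) * (inverse (sqrt y) / 2)"
      using that by (intro DERIV_chain2[OF GB_deriv DERIV_real_sqrt]) auto
    then show ?thesis using chi2_density_alg[OF that d] by simp
  qed
  have "(LBINT y=ereal 0..ereal x. chi2_density DIM('a) y) = ?F x - 0"
  proof (rule interval_integral_FTC_nonneg)
    show "ereal 0 < ereal x" using x by simp
    show "\<And>y. ereal 0 < ereal y \<Longrightarrow> ereal y < ereal x \<Longrightarrow> DERIV ?F y :> chi2_density DIM('a) y"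
      using der by auto
    show "\<And>y. ereal 0 < ereal y \<Longrightarrow> ereal y < ereal x \<Longrightarrow> isCont (chi2_density DIM('a)) y"
      using chi2_density_isCont d by auto
    show "AE y in lborel. ereal 0 < ereal y \<longrightarrow> ereal y < ereal x \<longrightarrow> 0 \<le> chi2_density DIM('a) y"
      by (simp add: chi2_density_nonneg)
    show "((?F \<circ> real_of_ereal) \<longlongrightarrow> 0) (at_right (ereal 0))"
      unfolding ereal_tendsto_simps by (rule GB_right0)
    have "isCont ?F x" using der[OF x] by (rule DERIV_isCont)
    then show "((?F \<circ> real_of_ereal) \<longlongrightarrow> ?F x) (at_left (ereal x))"
      unfolding ereal_tendsto_simps isCont_def by (rule tendsto_mono[OF at_le, rotated]) auto
  qed
  then show ?thesis by (simp add: chi2_cdf_def zero_ereal_def)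
qed


lemma GB_pos: "0 < r \<Longrightarrow> 0 < GB (t::'a::euclidean_space itself) r"
proof -
  assume r: "0 < r"
  have W0: "Wv DIM('a) 0 = 0" using DIM_positive[where 'a='a] by (simp add: Wv_def zero_power)
  have "Ek DIM('a) r * (Wv DIM('a) r - Wv DIM('a) 0) \<le> GB t r - GB t 0"
    using r by (intro GB_shell(1)) auto
  moreover have "0 < Ek DIM('a) r * (Wv DIM('a) r - Wv DIM('a) 0)"
    using r W0 Ek_pos[of "DIM('a)" r] Wv_pos[of r, where 'a='a] by simp
  ultimately show ?thesis using GB_nonneg[of t 0] by linarith
qed

lemma GB_isCont: "0 < r \<Longrightarrow> isCont (GB (t::'a::euclidean_space itself)) r"
  using GB_deriv by (rule DERIV_isCont)

lemma GB_1_less: "GB (t::'a::euclidean_space itself) 1 < 1"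
proof -
  have "Ek DIM('a) 3 * (Wv DIM('a) 3 - Wv DIM('a) 1) \<le> GB t 3 - GB t 1"
    by (rule GB_shell(1)) auto
  moreover have "Wv DIM('a) 1 < Wv DIM('a) 3"
    unfolding Wv_def using DIM_positive[where 'a='a]
    by (intro mult_strict_left_mono) (auto intro!: one_less_power)
  moreover have "0 < Ek DIM('a) 3" by (rule Ek_pos)
  ultimately have "0 < Ek DIM('a) 3 * (Wv DIM('a) 3 - Wv DIM('a) 1)" by simp
  with \<open>Ek DIM('a) 3 * (Wv DIM('a) 3 - Wv DIM('a) 1) \<le> GB t 3 - GB t 1\<close>
  have "GB t 1 < GB t 3" by linarith
  then show ?thesis using GB_le1[of t 3] by simp
qed

lemma lawX_GB:
  assumes "t0 < t"
  shows "lawX t0 t (cball (0::'a::euclidean_space) 1) = GB TYPE('a) (1 / (t - t0))"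
proof -
  have "{v \<in> space (std_gauss::'a measure). (t - t0) *\<^sub>R v \<in> cball 0 1} = cball 0 (1 / (t - t0))"
  proof (intro set_eqI)
    fix v :: 'a
    have e1: "norm ((t - t0) *\<^sub>R v) = (t - t0) * norm v" using assms by simp
    have e2: "(t - t0) * norm v \<le> 1 \<longleftrightarrow> norm v \<le> 1 / (t - t0)"
      using assms by (simp add: pos_le_divide_eq mult.commute)
    show "v \<in> {v \<in> space (std_gauss::'a measure). (t - t0) *\<^sub>R v \<in> cball 0 1} \<longleftrightarrow> v \<in> cball 0 (1 / (t - t0))"
      unfolding mem_Collect_eq mem_cball_0 std_gauss_space e1 e2 by simp
  qed
  then show ?thesis by (simp add: lawX_def GB_def)
qed

lemma lawXX_eq:
  assumes "t0 < u" "u \<le> t"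
  shows "lawXX t0 t u (cball (0::'a::euclidean_space) 1) = lawX t0 t (cball (0::'a) 1)"
proof -
  have "{v \<in> space (std_gauss::'a measure). (t - t0) *\<^sub>R v \<in> cball 0 1 \<and> (u - t0) *\<^sub>R v \<in> cball 0 1}
      = {v \<in> space (std_gauss::'a measure). (t - t0) *\<^sub>R v \<in> cball 0 1}"
  proof (intro set_eqI)
    fix v :: 'a
    have e1: "norm ((t - t0) *\<^sub>R v) = (t - t0) * norm v" using assms by simp
    have e2: "norm ((u - t0) *\<^sub>R v) = (u - t0) * norm v" using assms by simp
    have le: "(u - t0) * norm v \<le> (t - t0) * norm v"
      using assms by (intro mult_right_mono) auto
    show "v \<in> {v \<in> space (std_gauss::'a measure). (t - t0) *\<^sub>R v \<in> cball 0 1 \<and> (u - t0) *\<^sub>R v \<in> cball 0 1}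
       \<longleftrightarrow> v \<in> {v \<in> space (std_gauss::'a measure). (t - t0) *\<^sub>R v \<in> cball 0 1}"
      unfolding mem_Collect_eq mem_cball_0 std_gauss_space e1 e2 using le by auto
  qed
  then show ?thesis by (simp add: lawX_def lawXX_def)
qed

lemma condlaw_GB:
  assumes "t0 < u" "u \<le> t"
  shows "condlaw t0 t u (cball (0::'a::euclidean_space) 1) = GB TYPE('a) (1 / (t - t0)) / GB TYPE('a) (1 / (u - t0))"
  using assms by (simp add: condlaw_def lawXX_eq lawX_GB)

lemma chi2_GB':
  assumes "t0 < t"
  shows "chi2_cdf DIM('a::euclidean_space) ((t - t0) powr (-2)) = GB TYPE('a) (1 / (t - t0))"
proof -
  have s: "(t - t0) powr (-2) = (1 / (t - t0))\<^sup>2"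
    using assms by (simp add: powr_minus_divide powr_numeral power_one_over)
  have "sqrt ((1 / (t - t0))\<^sup>2) = 1 / (t - t0)" using assms by simp
  then show ?thesis using assms s chi2_GB[of "(t - t0) powr (-2)" "TYPE('a)"] by simp
qed

lemma exp_int:
  fixes a b \<alpha> t0 :: real
  assumes "a \<le> b"
  shows "(LBINT u=a..b. \<alpha> * exp (- \<alpha> * (u - t0))) = exp (- \<alpha> * (a - t0)) - exp (- \<alpha> * (b - t0))"
proof -
  have "(LBINT u=a..b. \<alpha> * exp (- \<alpha> * (u - t0))) = (- exp (- \<alpha> * (b - t0))) - (- exp (- \<alpha> * (a - t0)))"
    by (rule interval_integral_FTC_finite)
       (auto intro!: continuous_intros derivative_eq_intros
         simp: has_real_derivative_iff_has_vector_derivative[symmetric])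
  then show ?thesis by simp
qed

lemma exp_tail:
  fixes a \<alpha> t0 :: real
  assumes "0 < \<alpha>"
  shows "set_integrable lborel {a<..} (\<lambda>u. \<alpha> * exp (- \<alpha> * (u - t0)))"
    and "(LBINT u:{a<..}. \<alpha> * exp (- \<alpha> * (u - t0))) = exp (- \<alpha> * (a - t0))"
proof -
  let ?F = "\<lambda>u. - exp (- \<alpha> * (u - t0))"
  have der: "\<And>x. DERIV ?F x :> \<alpha> * exp (- \<alpha> * (x - t0))"
    by (auto intro!: derivative_eq_intros)
  have A: "((?F \<circ> real_of_ereal) \<longlongrightarrow> ?F a) (at_right (ereal a))"
    unfolding ereal_tendsto_simps by (intro tendsto_intros)
  have *: "((\<lambda>u. exp (- \<alpha> * (u - t0))) \<longlongrightarrow> 0) at_top"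
  proof -
    have e: "((\<lambda>u. exp (- u * \<alpha>)) \<longlongrightarrow> 0) at_top"
      using assms
      by (auto intro!: exp_at_bot[THEN filterlim_compose] filterlim_tendsto_pos_mult_at_top filterlim_ident
             simp: filterlim_uminus_at_bot mult.commute[of _ \<alpha>])
    have "((\<lambda>u. exp (\<alpha> * t0) * exp (- u * \<alpha>)) \<longlongrightarrow> exp (\<alpha> * t0) * 0) at_top"
      by (intro tendsto_mult tendsto_const e)
    moreover have "\<And>u. exp (\<alpha> * t0) * exp (- u * \<alpha>) = exp (- \<alpha> * (u - t0))"
      by (simp add: exp_add[symmetric] algebra_simps)
    ultimately show ?thesis by simp
  qed
  have B: "((?F \<circ> real_of_ereal) \<longlongrightarrow> 0) (at_left \<infinity>)"
    unfolding ereal_tendsto_simps using tendsto_minus[OF *] by simp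
  have r: "set_integrable lborel (einterval (ereal a) \<infinity>) (\<lambda>u. \<alpha> * exp (- \<alpha> * (u - t0)))"
       "(LBINT u=ereal a..\<infinity>. \<alpha> * exp (- \<alpha> * (u - t0))) = 0 - ?F a"
    using interval_integral_FTC_nonneg[OF _ der _ _ A B] assms by auto
  show "set_integrable lborel {a<..} (\<lambda>u. \<alpha> * exp (- \<alpha> * (u - t0)))" using r(1) by simp
  show "(LBINT u:{a<..}. \<alpha> * exp (- \<alpha> * (u - t0))) = exp (- \<alpha> * (a - t0))"
    using r(2) by (simp add: interval_lebesgue_integral_le_eq)
qed


lemma exist_part:
  fixes g f0 :: "real \<Rightarrow> real" and C :: "real \<Rightarrow> real \<Rightarrow> real" and t0 \<alpha> t :: real
  assumes gc: "continuous_on {t0<..} g"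
    and gpos: "\<And>t. t0 < t \<Longrightarrow> 0 < g t"
    and hC: "\<And>t u. t0 < u \<Longrightarrow> u < t \<Longrightarrow> C t u = g t / g u"
    and hf0: "\<And>t. t0 < t \<Longrightarrow> f0 t = \<alpha> * exp (- \<alpha> * (t - t0)) * g t"
    and t: "t0 < t"
  shows "set_integrable lborel {t0<..<t} (\<lambda>u. C t u * f0 u)"
    and "(LBINT u=t0..t. C t u * f0 u) = g t * (1 - exp (- \<alpha> * (t - t0)))"
proof -
  have eq: "C t u * f0 u = g t * (\<alpha> * exp (- \<alpha> * (u - t0)))" if "u \<in> {t0<..<t}" for u
    using that hC[of u t] hf0[of u] gpos[of u] by auto
  have "set_integrable lborel {t0..t} (\<lambda>u. g t * (\<alpha> * exp (- \<alpha> * (u - t0))))"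
    by (intro borel_integrable_atLeastAtMost' continuous_intros)
  then have "set_integrable lborel {t0<..<t} (\<lambda>u. g t * (\<alpha> * exp (- \<alpha> * (u - t0))))"
    by (rule set_integrable_subset) auto
  then show "set_integrable lborel {t0<..<t} (\<lambda>u. C t u * f0 u)"
    by (subst set_integrable_cong[OF refl refl eq]) auto
  have "(LBINT u=t0..t. C t u * f0 u) = (LBINT u=t0..t. g t * (\<alpha> * exp (- \<alpha> * (u - t0))))"
    using t by (intro interval_integral_cong) (auto simp: eq)
  also have "\<dots> = g t * (LBINT u=t0..t. \<alpha> * exp (- \<alpha> * (u - t0)))"
    by (rule interval_lebesgue_integral_mult_right)
  also have "\<dots> = g t * (1 - exp (- \<alpha> * (t - t0)))"
    using t by (subst exp_int) auto
  finally show "(LBINT u=t0..t. C t u * f0 u) = g t * (1 - exp (- \<alpha> * (t - t0)))" .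
qed


lemma uniq_part:
  fixes g f L :: "real \<Rightarrow> real" and C :: "real \<Rightarrow> real \<Rightarrow> real" and t0 \<alpha> :: real
  assumes \<alpha>: "0 < \<alpha>"
    and gc: "continuous_on {t0<..} g"
    and gpos: "\<And>t. t0 < t \<Longrightarrow> 0 < g t"
    and hL: "\<And>t. t0 < t \<Longrightarrow> L t = g t"
    and hC: "\<And>t u. t0 < u \<Longrightarrow> u < t \<Longrightarrow> C t u = g t / g u"
    and fc: "continuous_on {t0<..} f"
    and fi: "\<forall>t>t0. set_integrable lborel {t0<..<t} (\<lambda>u. C t u * f u)
               \<and> f t = \<alpha> * L t - \<alpha> * (LBINT u=t0..t. C t u * f u)"
  shows "\<forall>t>t0. f t = \<alpha> * exp (- \<alpha> * (t - t0)) * g t"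
proof -
  define h where "h u = f u / g u" for u
  define H where "H t = (LBINT u=ereal t0..ereal t. h u)" for t :: real
  have hc: "continuous_on {t0<..} h"
    unfolding h_def by (intro continuous_intros fc gc) (use gpos in fastforce)
  have eqC: "C t u * f u = g t * h u" if "t0 < u" "u < t" for t u
    using that hC[of u t] gpos[of u] by (simp add: h_def)
  have hint: "set_integrable lborel {t0<..<t} h" if t: "t0 < t" for t
  proof -
    have "set_integrable lborel {t0<..<t} (\<lambda>u. C t u * f u)" using fi t by auto
    then have "set_integrable lborel {t0<..<t} (\<lambda>u. g t * h u)"
      by (subst set_integrable_cong[OF refl refl, of _ _ "\<lambda>u. C t u * f u"]) (auto simp: eqC)
    then show ?thesis using gpos[OF t] by simp
  qed
  have heq: "h t = \<alpha> - \<alpha> * H t" if t: "t0 < t" for t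
  proof -
    have "(LBINT u=t0..t. C t u * f u) = (LBINT u=t0..t. g t * h u)"
      using t by (intro interval_integral_cong) (auto simp: eqC)
    also have "\<dots> = g t * H t" by (simp add: H_def)
    finally have "f t = \<alpha> * g t - \<alpha> * (g t * H t)" using fi t hL[OF t] by auto
    then show ?thesis using gpos[OF t] by (simp add: h_def field_simps)
  qed
  have Hder: "DERIV H x :> h x" if x: "t0 < x" for x
  proof -
    define a where "a = (t0 + x) / 2"
    define b where "b = x + 1"
    have a: "t0 < a" "a < x" and b: "x < b" using x by (auto simp: a_def b_def)
    have hcab: "continuous_on {a..b} h" using a by (intro continuous_on_subset[OF hc]) auto
    have Hsplit: "H y = H a + (LBINT u=a..y. h u)" if y: "a \<le> y" for y
    proof -
      have "interval_lebesgue_integrable lborel (min (ereal t0) (min (ereal a) (ereal y)))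
              (max (ereal t0) (max (ereal a) (ereal y))) h"
        using a y hint[of y] by (simp add: interval_lebesgue_integrable_def min_def max_def)
      from interval_integral_sum[OF this] show ?thesis by (simp add: H_def)
    qed
    have "((\<lambda>u. LBINT y=a..u. h y) has_vector_derivative h x) (at x within {a..b})"
      using a b by (intro interval_integral_FTC2 hcab) auto
    then have "((\<lambda>u. LBINT y=a..u. h y) has_real_derivative h x) (at x)"
      using a b by (simp add: at_within_Icc_at has_real_derivative_iff_has_vector_derivative)
    then have d1: "DERIV (\<lambda>u. H a + (LBINT y=a..u. h y)) x :> h x"
      by (auto intro!: derivative_eq_intros)
    have ev: "eventually (\<lambda>y. y \<in> {a<..}) (nhds x)"
      using a by (intro eventually_nhds_in_open) auto
    have "eventually (\<lambda>y. H y = H a + (LBINT u=a..y. h u)) (nhds x)"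
      using ev by eventually_elim (auto intro!: Hsplit)
    then show ?thesis using d1 by (subst DERIV_cong_ev[OF refl _ refl]) auto
  qed
  define Q where "Q t = (1 - H t) * exp (\<alpha> * (t - t0))" for t
  have Qder: "DERIV Q x :> 0" if x: "t0 < x" for x
  proof -
    have d: "DERIV (\<lambda>t. 1 - H t) x :> - h x"
      using Hder[OF x] by (intro derivative_eq_intros) auto
    have e: "DERIV (\<lambda>t. exp (\<alpha> * (t - t0))) x :> exp (\<alpha> * (x - t0)) * \<alpha>"
      by (auto intro!: derivative_eq_intros)
    have z: "(- h x) * exp (\<alpha> * (x - t0)) + exp (\<alpha> * (x - t0)) * \<alpha> * (1 - H x) = 0"
      unfolding heq[OF x] by (simp add: algebra_simps)
    show ?thesis using DERIV_mult[OF d e] unfolding Q_def z .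
  qed
  have Qmono: "Q q = Q p" if pq: "t0 < p" "p < q" for p q
  proof -
    have cont: "continuous_on {p..q} Q"
      by (rule continuous_at_imp_continuous_on) (use pq in \<open>auto intro!: DERIV_isCont[OF Qder]\<close>)
    show ?thesis
      by (rule DERIV_isconst2[OF pq(2) cont]) (use pq in \<open>auto intro!: Qder\<close>)
  qed
  define c where "c = Q (t0 + 1)"
  have Qc: "Q t = c" if t: "t0 < t" for t
  proof (cases rule: linorder_cases[of t "t0 + 1"])
    case less
    then show ?thesis using Qmono[of t "t0 + 1"] t by (simp add: c_def)
  next
    case equal
    then show ?thesis by (simp add: c_def)
  next
    case greater
    then show ?thesis using Qmono[of "t0 + 1" t] by (simp add: c_def)
  qed
  have Hform: "1 - H t = c * exp (- \<alpha> * (t - t0))" if t: "t0 < t" for t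
  proof -
    have "(1 - H t) * exp (\<alpha> * (t - t0)) = c" using Qc[OF t] by (simp add: Q_def)
    then have "(1 - H t) * exp (\<alpha> * (t - t0)) * exp (- \<alpha> * (t - t0)) = c * exp (- \<alpha> * (t - t0))" by simp
    then show ?thesis by (simp add: mult.assoc exp_add[symmetric])
  qed
  have hform: "h t = c * (\<alpha> * exp (- \<alpha> * (t - t0)))" if t: "t0 < t" for t
  proof -
    have "h t = \<alpha> * (1 - H t)" using heq[OF t] by (simp add: algebra_simps)
    then show ?thesis unfolding Hform[OF t] by simp
  qed
  have "H (t0 + 1) = (LBINT u=t0..t0+1. c * (\<alpha> * exp (- \<alpha> * (u - t0))))"
    unfolding H_def by (intro interval_integral_cong) (auto simp: hform)
  also have "\<dots> = c * (1 - exp (- \<alpha>))"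
    by (subst interval_lebesgue_integral_mult_right, subst exp_int) auto
  finally have "1 - c * (1 - exp (- \<alpha>)) = c * exp (- \<alpha>)"
    using Hform[of "t0 + 1"] by simp
  then have c1: "c = 1" by (simp add: algebra_simps)
  show ?thesis
  proof (intro allI impI)
    fix t assume t: "t0 < t"
    have "f t = h t * g t" using gpos[OF t] by (simp add: h_def)
    then show "f t = \<alpha> * exp (- \<alpha> * (t - t0)) * g t" using hform[OF t] c1 by simp
  qed
qed


lemma tail_part:
  fixes g f0 :: "real \<Rightarrow> real" and t0 \<alpha> c :: real
  assumes \<alpha>: "0 < \<alpha>"
    and gpos: "\<And>t. t0 < t \<Longrightarrow> 0 < g t"
    and gle: "\<And>t. t0 < t \<Longrightarrow> g t \<le> 1"
    and gc1: "\<And>t. t0 + 1 < t \<Longrightarrow> g t \<le> c" and c1: "c < 1"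
    and hf0: "\<And>t. t0 < t \<Longrightarrow> f0 t = \<alpha> * exp (- \<alpha> * (t - t0)) * g t"
    and f0c: "continuous_on {t0<..} f0"
  shows "set_integrable lborel {t0<..} f0" and "(LBINT t:{t0<..}. f0 t) < 1"
proof -
  let ?k = "\<lambda>u. \<alpha> * exp (- \<alpha> * (u - t0))"
  have ki: "set_integrable lborel {t0<..} ?k" and kv: "(LBINT u:{t0<..}. ?k u) = 1"
    using exp_tail[OF \<alpha>, of t0 t0] by auto
  have meas: "set_borel_measurable lborel {t0<..} f0"
    unfolding set_borel_measurable_def
    using borel_measurable_continuous_on_indicator[OF _ f0c] by simp
  have bnd: "0 \<le> f0 u \<and> f0 u \<le> ?k u" if "t0 < u" for u
    using hf0[OF that] gpos[OF that] gle[OF that] \<alpha> by (auto intro!: mult_left_mono[of _ 1, simplified])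
  show fi: "set_integrable lborel {t0<..} f0"
  proof (rule set_integrable_bound[OF ki meas])
    show "AE x in lborel. x \<in> {t0<..} \<longrightarrow> norm (f0 x) \<le> norm (?k x)"
    proof (intro AE_I2 impI)
      fix x assume "x \<in> {t0<..}"
      then show "norm (f0 x) \<le> norm (?k x)" using bnd[of x] \<alpha> by simp
    qed
  qed
  have di: "set_integrable lborel {t0<..} (\<lambda>u. ?k u - f0 u)"
    and dv: "(LBINT u:{t0<..}. ?k u - f0 u) = 1 - (LBINT u:{t0<..}. f0 u)"
    using set_integral_diff[OF ki fi] kv by auto
  let ?l = "\<lambda>u. (1 - c) * (indicator {t0+1<..} u * ?k u)"
  have k1i: "set_integrable lborel {t0+1<..} ?k" and k1v: "(LBINT u:{t0+1<..}. ?k u) = exp (- \<alpha>)"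
    using exp_tail[OF \<alpha>, of "t0 + 1" t0] by auto
  have ind: "indicator {t0<..} u *\<^sub>R (indicator {t0+1<..} u * ?k u) = indicator {t0+1<..} u *\<^sub>R ?k u" for u :: real
    by (auto simp: indicator_def)
  have li0: "set_integrable lborel {t0<..} (\<lambda>u. indicator {t0+1<..} u * ?k u)"
    using k1i unfolding set_integrable_def ind .
  have li: "set_integrable lborel {t0<..} ?l"
    using li0 by (rule set_integrable_mult_right)
  have lv: "(LBINT u:{t0<..}. ?l u) = (1 - c) * exp (- \<alpha>)"
  proof -
    have "(LBINT u:{t0<..}. indicator {t0+1<..} u * ?k u) = (LBINT u:{t0+1<..}. ?k u)"
      unfolding set_lebesgue_integral_def ind ..
    then show ?thesis using k1v by simp
  qed
  have "(LBINT u:{t0<..}. ?l u) \<le> (LBINT u:{t0<..}. ?k u - f0 u)"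
  proof (rule set_integral_mono[OF li di])
    fix u assume u: "u \<in> {t0<..}"
    show "?l u \<le> ?k u - f0 u"
    proof (cases "t0 + 1 < u")
      case True
      have "(1 - c) * ?k u \<le> (1 - g u) * ?k u"
        using gc1[OF True] \<alpha> by (intro mult_right_mono) auto
      then show ?thesis using True hf0[of u] u by (simp add: algebra_simps)
    next
      case False
      then show ?thesis using bnd[of u] u by simp
    qed
  qed
  moreover have "0 < (1 - c) * exp (- \<alpha>)" using c1 by simp
  ultimately show "(LBINT t:{t0<..}. f0 t) < 1" using lv dv by linarith
qed


theorem mainTheorem13:
  fixes t0 \<alpha> :: real
  defines "Dc \<equiv> cball (0::'a::euclidean_space) 1"
  defines "f0 \<equiv> (\<lambda>t. \<alpha> * exp (- \<alpha> * (t - t0)) * chi2_cdf DIM('a) ((t - t0) powr (-2)))"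
  assumes "\<alpha> > 0"
  shows "continuous_on {t0<..} f0
     \<and> (\<forall>t>t0. set_integrable lborel {t0<..<t} (\<lambda>u. condlaw t0 t u Dc * f0 u)
               \<and> f0 t = \<alpha> * lawX t0 t Dc - \<alpha> * (LBINT u=t0..t. condlaw t0 t u Dc * f0 u))
     \<and> (\<forall>f. continuous_on {t0<..} f
           \<and> (\<forall>t>t0. set_integrable lborel {t0<..<t} (\<lambda>u. condlaw t0 t u Dc * f u)
               \<and> f t = \<alpha> * lawX t0 t Dc - \<alpha> * (LBINT u=t0..t. condlaw t0 t u Dc * f u))
           \<longrightarrow> (\<forall>t>t0. f t = f0 t))
     \<and> set_integrable lborel {t0<..} f0
     \<and> (LBINT t:{t0<..}. f0 t) < 1"
proof -
  note \<alpha> = \<open>\<alpha> > 0\<close>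
  define g where "g t = GB TYPE('a) (1 / (t - t0))" for t
  let ?L = "\<lambda>t. lawX t0 t Dc"
  let ?C = "\<lambda>t u. condlaw t0 t u Dc"
  have gpos: "0 < g t" if "t0 < t" for t
    unfolding g_def using that by (intro GB_pos) simp
  have gle: "g t \<le> 1" for t unfolding g_def by (rule GB_le1)
  have gc1: "g t \<le> GB TYPE('a) 1" if "t0 + 1 < t" for t
    unfolding g_def using that by (intro GB_mono) (auto simp: divide_le_eq)
  have gc: "continuous_on {t0<..} g"
  proof (rule continuous_at_imp_continuous_on, intro ballI)
    fix t :: real assume "t \<in> {t0<..}"
    then have t: "t0 < t" by simp
    have "isCont (\<lambda>t. 1 / (t - t0)) t" using t by (intro continuous_intros) auto
    moreover have "isCont (GB TYPE('a)) (1 / (t - t0))" using t by (intro GB_isCont) simp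
    ultimately show "isCont g t" unfolding g_def by (rule isCont_o2)
  qed
  have hL: "?L t = g t" if "t0 < t" for t
    unfolding Dc_def g_def using that by (rule lawX_GB)
  have hC: "?C t u = g t / g u" if "t0 < u" "u < t" for t u
    unfolding Dc_def g_def using that by (intro condlaw_GB) auto
  have hf0: "f0 t = \<alpha> * exp (- \<alpha> * (t - t0)) * g t" if "t0 < t" for t
    unfolding f0_def g_def using chi2_GB'[OF that, where 'a='a] by simp
  have f0c: "continuous_on {t0<..} f0"
  proof -
    have "continuous_on {t0<..} (\<lambda>t. \<alpha> * exp (- \<alpha> * (t - t0)) * g t)"
      by (intro continuous_intros gc)
    then show ?thesis by (rule continuous_on_cong[THEN iffD1, rotated 2]) (auto simp: hf0)
  qed
  have P2: "\<forall>t>t0. set_integrable lborel {t0<..<t} (\<lambda>u. ?C t u * f0 u)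
               \<and> f0 t = \<alpha> * ?L t - \<alpha> * (LBINT u=t0..t. ?C t u * f0 u)"
  proof (intro allI impI conjI)
    fix t assume t: "t0 < t"
    note E = exist_part[OF gc gpos hC hf0 t]
    show "set_integrable lborel {t0<..<t} (\<lambda>u. ?C t u * f0 u)" by (rule E(1))
    have I: "(LBINT u=t0..t. ?C t u * f0 u) = g t - g t * exp (- \<alpha> * (t - t0))"
      using E(2) by (simp add: algebra_simps)
    show "f0 t = \<alpha> * ?L t - \<alpha> * (LBINT u=t0..t. ?C t u * f0 u)"
      unfolding I hL[OF t] hf0[OF t] by (simp add: algebra_simps)
  qed
  have P3: "\<forall>f. continuous_on {t0<..} f
           \<and> (\<forall>t>t0. set_integrable lborel {t0<..<t} (\<lambda>u. ?C t u * f u)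
               \<and> f t = \<alpha> * ?L t - \<alpha> * (LBINT u=t0..t. ?C t u * f u))
           \<longrightarrow> (\<forall>t>t0. f t = f0 t)"
  proof (intro allI impI)
    fix f :: "real \<Rightarrow> real" and t :: real
    assume A: "continuous_on {t0<..} f
           \<and> (\<forall>t>t0. set_integrable lborel {t0<..<t} (\<lambda>u. ?C t u * f u)
               \<and> f t = \<alpha> * ?L t - \<alpha> * (LBINT u=t0..t. ?C t u * f u))"
      and t: "t0 < t"
    have "\<forall>t>t0. f t = \<alpha> * exp (- \<alpha> * (t - t0)) * g t"
      using A by (intro uniq_part[OF \<alpha> gc gpos hL hC]) auto
    then show "f t = f0 t" using t hf0[OF t] by simp
  qed
  note T = tail_part[OF \<alpha> gpos gle gc1 GB_1_less hf0 f0c]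
  show ?thesis using f0c P2 P3 T by blast
qed

end
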